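(* Let $D>0$, $n\ge1$, and let $V:S^1\to\mathbb R$ be continuous, odd and $\tfrac1n$-periodic. Then every nonnegative ($\mathcal C^2$) stationary solution $f$ of (TP) with $\int_{S^1}f=1$ is $\tfrac1n$-periodic.
   Context: $S^1=\mathbb R/\mathbb Z$; $(V*f)(\theta)=\int_{S^1}V(\theta-\psi)f(\psi)d\psi$. Equation (TP): $\partial_tf=D\partial_\theta^2f+\partial_\theta((V*f)f)$; a stationary solution is a time-independent solution. *)

theory Defs
  imports "HOL-Analysis.Analysis"
begin

text \<open>Functions on S^1 = R/Z are represented as 1-periodic functions on the reals.\<close>

definition periodic_with :: "real \<Rightarrow> (real \<Rightarrow> real) \<Rightarrow> bool" where
  "periodic_with p g \<longleftrightarrow> (\<forall>x. g (x + p) = g x)"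

definition circ_conv :: "(real \<Rightarrow> real) \<Rightarrow> (real \<Rightarrow> real) \<Rightarrow> real \<Rightarrow> real" where
  "circ_conv V f \<theta> = integral {0..1} (\<lambda>\<psi>. V (\<theta> - \<psi>) * f \<psi>)"

definition is_C2 :: "(real \<Rightarrow> real) \<Rightarrow> bool" where
  "is_C2 f \<longleftrightarrow> (\<forall>x. f differentiable (at x)) \<and> (\<forall>x. deriv f differentiable (at x))
      \<and> continuous_on UNIV (deriv (deriv f))"

definition stationary_TP :: "real \<Rightarrow> (real \<Rightarrow> real) \<Rightarrow> (real \<Rightarrow> real) \<Rightarrow> bool" where
  "stationary_TP D V f \<longleftrightarrow>
     (\<forall>\<theta>. (\<lambda>x. circ_conv V f x * f x) differentiable (at \<theta>) \<and>
          D * deriv (deriv f) \<theta> + deriv (\<lambda>x. circ_conv V f x * f x) \<theta> = 0)"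

end

theory Submission
  imports Defs
begin
lemma gronwall0:
  fixes u u' :: "real \<Rightarrow> real"
  assumes ab: "a \<le> b" and K: "K \<ge> 0"
    and d: "\<And>t. (u has_real_derivative u' t) (at t)"
    and bd: "\<And>t. t \<in> {a..b} \<Longrightarrow> \<bar>u' t\<bar> \<le> K * \<bar>u t\<bar>"
    and ua: "u a = 0"
  shows "u b = 0"
proof -
  define \<phi> where "\<phi> t = exp (-2*K*t) * (u t)^2" for t
  have dphi: "(\<phi> has_real_derivative exp (-2*K*t) * (2 * u t * u' t - 2*K*(u t)^2)) (at t)" for t
    unfolding \<phi>_def
    by (rule derivative_eq_intros d refl | simp)+ (simp add: algebra_simps)
  have cont: "continuous_on {a..b} \<phi>"
    using dphi by (meson DERIV_continuous continuous_at_imp_continuous_on)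
  have "\<phi> b \<le> \<phi> a"
  proof (rule DERIV_nonpos_imp_decreasing_open[OF ab _ cont])
    fix x assume x: "a < x" "x < b"
    have "u x * u' x \<le> K * (u x)^2"
    proof -
      have "u x * u' x \<le> \<bar>u x\<bar> * \<bar>u' x\<bar>" by (metis abs_ge_self abs_mult)
      also have "\<dots> \<le> \<bar>u x\<bar> * (K * \<bar>u x\<bar>)" using bd[of x] x by (intro mult_left_mono) auto
      also have "\<dots> = K * (u x)^2" by (simp add: power2_eq_square abs_mult_self_eq)
      finally show ?thesis .
    qed
    then have "exp (-2*K*x) * (2 * u x * u' x - 2*K*(u x)^2) \<le> 0"
      by (intro mult_nonneg_nonpos) auto
    then show "\<exists>y. (\<phi> has_real_derivative y) (at x) \<and> y \<le> 0" using dphi by blast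
  qed
  moreover have "\<phi> a = 0" using ua by (simp add: \<phi>_def)
  ultimately have "exp (-2*K*b) * (u b)^2 \<le> 0" by (simp add: \<phi>_def)
  then have "(u b)^2 \<le> 0" by (simp add: mult_le_0_iff)
  then show ?thesis by simp
qed

lemma uniq0:
  fixes u u' :: "real \<Rightarrow> real"
  assumes d: "\<And>t. (u has_real_derivative u' t) (at t)"
    and bd: "\<And>a b. \<exists>K\<ge>0. \<forall>t\<in>{a..b}. \<bar>u' t\<bar> \<le> K * \<bar>u t\<bar>"
    and u0: "u t0 = 0"
  shows "u x = 0"
proof (cases "t0 \<le> x")
  case True
  obtain K where K: "K \<ge> 0" "\<forall>t\<in>{t0..x}. \<bar>u' t\<bar> \<le> K * \<bar>u t\<bar>" using bd by blast
  show ?thesis by (rule gronwall0[OF True K(1) d]) (use K u0 in auto)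
next
  case False
  obtain K where K: "K \<ge> 0" "\<forall>t\<in>{x..t0}. \<bar>u' t\<bar> \<le> K * \<bar>u t\<bar>" using bd by blast
  have dv: "((\<lambda>t. u (-t)) has_real_derivative - u' (-t)) (at t)" for t
    using DERIV_chain2[OF d[of "-t"] DERIV_minus[OF DERIV_ident]] by simp
  have "(\<lambda>t. u (-t)) (-x) = 0"
  proof (rule gronwall0[where u'="\<lambda>t. - u' (-t)", OF _ K(1) dv])
    show "- t0 \<le> - x" using False by simp
    fix t assume "t \<in> {-t0..-x}"
    then have "-t \<in> {x..t0}" by auto
    then show "\<bar>- u' (- t)\<bar> \<le> K * \<bar>u (- t)\<bar>" using K by auto
  qed (use u0 in auto)
  then show ?thesis by simp
qed

theorem mainTheorem11:
  fixes D :: real and n :: nat and V f :: "real \<Rightarrow> real"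
  assumes "D > 0" and "n \<ge> 1"
    and "continuous_on UNIV V"
    and "\<forall>x. V (- x) = - V x"
    and "periodic_with 1 V"
    and "periodic_with (1 / real n) V"
    and "periodic_with 1 f"
    and "is_C2 f"
    and "\<forall>x. f x \<ge> 0"
    and "integral {0..1} f = 1"
    and "stationary_TP D V f"
  shows "periodic_with (1 / real n) f"
proof -
  define h where "h = 1 / real n"
  define w where "w = circ_conv V f"
  define P where "P x = w x * f x" for x
  have Dp: "D > 0" using assms(1) .
  have df: "(f has_real_derivative deriv f x) (at x)" for x
    using assms(8) unfolding is_C2_def by (simp add: DERIV_deriv_iff_real_differentiable)
  have ddf: "(deriv f has_real_derivative deriv (deriv f) x) (at x)" for x
    using assms(8) unfolding is_C2_def by (simp add: DERIV_deriv_iff_real_differentiable)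
  have fcont: "continuous_on S f" for S
    using df by (meson DERIV_continuous continuous_at_imp_continuous_on)
  have dP: "(P has_real_derivative deriv P x) (at x)" for x
    using assms(11) unfolding stationary_TP_def P_def[abs_def] w_def
    by (simp add: DERIV_deriv_iff_real_differentiable)
  have eqn: "D * deriv (deriv f) x + deriv P x = 0" for x
    using assms(11) unfolding stationary_TP_def P_def[abs_def] w_def by simp
  define Q where "Q x = D * deriv f x + P x" for x
  have dQ: "(Q has_real_derivative 0) (at x)" for x
  proof -
    have "(Q has_real_derivative D * deriv (deriv f) x + deriv P x) (at x)"
      unfolding Q_def[abs_def] by (intro DERIV_add DERIV_cmult ddf dP)
    then show ?thesis using eqn by simp
  qed
  have Qc: "Q x = Q 0" for x using DERIV_isconst_all dQ by blast
  have Vper: "V (y + h) = V y" for y using assms(6) unfolding periodic_with_def h_def by simp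
  have wper: "w (x + h) = w x" for x
  proof -
    have "(\<lambda>\<psi>. V (x + h - \<psi>) * f \<psi>) = (\<lambda>\<psi>. V (x - \<psi>) * f \<psi>)"
      by (rule ext) (metis Vper add_diff_eq diff_add_eq)
    then show ?thesis unfolding w_def circ_conv_def by simp
  qed
  define u where "u x = f (x + h) - f x" for x
  define u' where "u' x = deriv f (x + h) - deriv f x" for x
  have du: "(u has_real_derivative u' x) (at x)" for x
    unfolding u_def[abs_def] u'_def
    by (intro DERIV_diff df DERIV_shift[THEN iffD1])
  have ucont: "continuous_on S u" for S
    using du by (meson DERIV_continuous continuous_at_imp_continuous_on)
  have ueq: "D * u' x = - (w x * u x)" for x
  proof -
    have "Q (x + h) = Q x" using Qc by metis
    then show ?thesis unfolding Q_def P_def u_def u'_def wper by (simp add: algebra_simps)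
  qed
  have bd: "\<exists>K\<ge>0. \<forall>t\<in>{a..b}. \<bar>u' t\<bar> \<le> K * \<bar>u t\<bar>" for a b
  proof -
    have "compact (V ` {a-1..b})"
      by (rule compact_continuous_image) (use assms(3) continuous_on_subset in auto)
    then obtain M where M: "M > 0" "\<forall>y\<in>V ` {a-1..b}. norm y \<le> M"
      using compact_imp_bounded bounded_pos by metis
    have wb: "\<bar>w t\<bar> \<le> M" if t: "t \<in> {a..b}" for t
    proof -
      have c1: "continuous_on {0..1} (\<lambda>\<psi>. V (t - \<psi>) * f \<psi>)"
        by (intro continuous_intros fcont continuous_on_compose2[OF assms(3)]) auto
      have "norm (integral {0..1} (\<lambda>\<psi>. V (t - \<psi>) * f \<psi>)) \<le> integral {0..1} (\<lambda>\<psi>. M * f \<psi>)"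
      proof (rule integral_norm_bound_integral)
        show "(\<lambda>\<psi>. V (t - \<psi>) * f \<psi>) integrable_on {0..1}"
          using c1 integrable_continuous_interval by blast
        show "(\<lambda>\<psi>. M * f \<psi>) integrable_on {0..1}"
          by (intro integrable_continuous_interval continuous_intros fcont)
        fix \<psi> :: real assume "\<psi> \<in> {0..1}"
        then have "t - \<psi> \<in> {a-1..b}" using t by auto
        then have "\<bar>V (t - \<psi>)\<bar> \<le> M" using M by auto
        then show "norm (V (t - \<psi>) * f \<psi>) \<le> M * f \<psi>"
          using assms(9) by (simp add: abs_mult mult_right_mono)
      qed
      also have "\<dots> = M" using assms(10) by simp
      finally show ?thesis unfolding w_def circ_conv_def by simp
    qed
    show ?thesis
    proof (intro exI[of _ "M / D"] conjI ballI)
      show "M / D \<ge> 0" using M Dp by simp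
      fix t assume t: "t \<in> {a..b}"
      have "\<bar>u' t\<bar> = \<bar>w t\<bar> * \<bar>u t\<bar> / D"
      proof -
        have "u' t = - (w t * u t) / D" using ueq[of t] Dp by (metis nonzero_mult_div_cancel_left less_irrefl)
        then show ?thesis using Dp by (simp add: abs_mult)
      qed
      also have "\<dots> \<le> M * \<bar>u t\<bar> / D"
        using wb[OF t] Dp by (intro divide_right_mono mult_right_mono) auto
      finally show "\<bar>u' t\<bar> \<le> M / D * \<bar>u t\<bar>" by simp
    qed
  qed
  have n0: "real n > 0" using assms(2) by simp
  have sum0: "(\<Sum>k<n. u (real k * h)) = 0"
  proof -
    have "(\<Sum>k<n. u (real k * h)) = (\<Sum>k<n. f (real (Suc k) * h) - f (real k * h))"
      unfolding u_def by (simp add: algebra_simps)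
    also have "\<dots> = f (real n * h) - f (real 0 * h)" by (rule sum_lessThan_telescope)
    also have "\<dots> = 0"
    proof -
      have "real n * h = 0 + 1" using n0 unfolding h_def by simp
      moreover have "f (0 + 1) = f 0" using assms(7) unfolding periodic_with_def by blast
      ultimately show ?thesis by simp
    qed
    finally show ?thesis .
  qed
  have ne: "{..<n} \<noteq> {}" using assms(2) lessThan_empty_iff by (metis not_one_le_zero)
  obtain k where k: "k < n" "u (real k * h) \<ge> 0"
  proof (rule ccontr)
    assume "\<not> thesis"
    then have "\<forall>k\<in>{..<n}. u (real k * h) < 0" using that by force
    then have "(\<Sum>k<n. u (real k * h)) < (\<Sum>k<n. 0)" by (intro sum_strict_mono ne) auto
    then show False using sum0 by simp
  qed
  obtain j where j: "j < n" "u (real j * h) \<le> 0"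
  proof (rule ccontr)
    assume "\<not> thesis"
    then have "\<forall>k\<in>{..<n}. 0 < u (real k * h)" using that by force
    then have "(\<Sum>k<n. 0) < (\<Sum>k<n. u (real k * h))" by (intro sum_strict_mono ne) auto
    then show False using sum0 by simp
  qed
  obtain t0 where t0: "u t0 = 0"
  proof (cases "real j * h \<le> real k * h")
    case True
    then show ?thesis using IVT'[OF j(2) k(2) True ucont] that by blast
  next
    case False
    then show ?thesis using IVT2'[OF j(2) k(2) _ ucont] that by fastforce
  qed
  have "u x = 0" for x by (rule uniq0[OF du bd t0])
  then show ?thesis unfolding periodic_with_def u_def h_def by simp
qed
end
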